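(* For every $x_G\in\mathcal{X}_G$, $$\underline{P}^{\mathrm{irr}}_G(x_G)=\prod_{s\in G}\underline{P}_{s\mid x_{P(s)}}(x_s)\quad\text{and}\quad\overline{P}^{\mathrm{irr}}_G(x_G)=\prod_{s\in G}\overline{P}_{s\mid x_{P(s)}}(x_s),$$ where $x_s$ and $x_{P(s)}$ are the restrictions of $x_G$.
   Context: Setting: $G$ is a finite set of nodes forming a DAG; node $s$ carries a variable $X_s$ with finite nonempty state space $\mathcal{X}_s$; $\mathcal{X}_S=\times_{s\in S}\mathcal{X}_s$. $P(s)$: parents; $D(s)$: the set of nodes reachable from $s$ by a directed path of positive length; $N(s)=G\setminus(\{s\}\cup D(s))$. Local models: for every $s$ and $x_{P(s)}$, $\mathcal{M}_{s\mid x_{P(s)}}$ is a nonempty closed convex set of probability mass functions on $\mathcal{X}_s$; local lower/upper probabilities are $\underline{P}_{s\mid x_{P(s)}}(x_s)=\min\{p(x_s):p\in\mathcal{M}_{s\mid x_{P(s)}}\}$ and $\overline{P}_{s\mid x_{P(s)}}(x_s)=\max\{p(x_s):p\in\mathcal{M}_{s\mid x_{P(s)}}\}$. Full conditional probability measure on finite $\Omega$: $(A,B)\mapsto P(A\mid B)$ ($B\ne\emptyset$), (F1) $P(\cdot\mid B)$ a probability measure with $P(B\mid B)=1$; (F2) $P(A\cap C\mid B)=P(A\mid C\cap B)P(C\mid B)$ if $C\cap B\ne\emptyset$. The event $x_S$ is $\{z_G:z_S=x_S\}$; $P(A)=P(A\mid\mathcal{X}_G)$. Irrelevant natural extension $\mathcal{F}^{\mathrm{irr}}_G$: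 all full conditional probability measures $P$ on $\mathcal{X}_G$ with $P(X_s\mid x_{N(s)})\in\mathcal{M}_{s\mid x_{P(s)}}$ for all $s,x_{N(s)}$. $\underline{P}^{\mathrm{irr}}_G(A)=\inf\{P(A):P\in\mathcal{F}^{\mathrm{irr}}_G\}$ and $\overline{P}^{\mathrm{irr}}_G(A)=\sup\{P(A):P\in\mathcal{F}^{\mathrm{irr}}_G\}$. *)

theory Defs
  imports "HOL-Analysis.Analysis" "HOL-Library.FuncSet"
begin

(* Nodes have type 'n, states type 'v. G is the finite set of nodes,
   par s the set of parents of s, X s the state space of node s.
   A joint state x_G is an element of PiE G X (extensional to G). *)

definition edges :: "'n set \<Rightarrow> ('n \<Rightarrow> 'n set) \<Rightarrow> ('n \<times> 'n) set" where
  "edges G par = {(p, s). s \<in> G \<and> p \<in> par s}"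

definition is_dag :: "'n set \<Rightarrow> ('n \<Rightarrow> 'n set) \<Rightarrow> bool" where
  "is_dag G par \<longleftrightarrow> finite G \<and> (\<forall>s\<in>G. par s \<subseteq> G) \<and> acyclic (edges G par)"

definition desc :: "'n set \<Rightarrow> ('n \<Rightarrow> 'n set) \<Rightarrow> 'n \<Rightarrow> 'n set" where
  "desc G par s = {t. (s, t) \<in> (edges G par)\<^sup>+}"

definition nondesc :: "'n set \<Rightarrow> ('n \<Rightarrow> 'n set) \<Rightarrow> 'n \<Rightarrow> 'n set" where
  "nondesc G par s = G - ({s} \<union> desc G par s)"

definition event :: "'n set \<Rightarrow> ('n \<Rightarrow> 'v set) \<Rightarrow> 'n set \<Rightarrow> ('n \<Rightarrow> 'v) \<Rightarrow> ('n \<Rightarrow> 'v) set" where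
  "event G X S x = {z \<in> PiE G X. \<forall>s\<in>S. z s = x s}"

definition is_pmf_on :: "'v set \<Rightarrow> ('v \<Rightarrow> real) \<Rightarrow> bool" where
  "is_pmf_on A p \<longleftrightarrow> (\<forall>v\<in>A. 0 \<le> p v) \<and> (\<forall>v. v \<notin> A \<longrightarrow> p v = 0) \<and> sum p A = 1"

definition convex_fun_set :: "('v \<Rightarrow> real) set \<Rightarrow> bool" where
  "convex_fun_set M \<longleftrightarrow>
     (\<forall>p\<in>M. \<forall>q\<in>M. \<forall>t::real. 0 \<le> t \<and> t \<le> 1 \<longrightarrow> (\<lambda>v. t * p v + (1 - t) * q v) \<in> M)"

definition local_model :: "'v set \<Rightarrow> ('v \<Rightarrow> real) set \<Rightarrow> bool" where
  "local_model A M \<longleftrightarrow> M \<noteq> {} \<and> closed M \<and> convex_fun_set M \<and> (\<forall>p\<in>M. is_pmf_on A p)"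

definition lowerP :: "('v \<Rightarrow> real) set \<Rightarrow> 'v \<Rightarrow> real" where
  "lowerP M v = Inf ((\<lambda>p. p v) ` M)"

definition upperP :: "('v \<Rightarrow> real) set \<Rightarrow> 'v \<Rightarrow> real" where
  "upperP M v = Sup ((\<lambda>p. p v) ` M)"

(* full conditional probability measure on the finite set \<Omega>:
   P A B is defined (meaningful) for A \<subseteq> \<Omega> and nonempty B \<subseteq> \<Omega> *)
definition full_cond_prob :: "'a set \<Rightarrow> ('a set \<Rightarrow> 'a set \<Rightarrow> real) \<Rightarrow> bool" where
  "full_cond_prob \<Omega> P \<longleftrightarrow>
     (\<forall>B. B \<subseteq> \<Omega> \<and> B \<noteq> {} \<longrightarrow>
        (\<forall>A. A \<subseteq> \<Omega> \<longrightarrow> 0 \<le> P A B) \<and> P \<Omega> B = 1 \<and>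
        (\<forall>A C. A \<subseteq> \<Omega> \<and> C \<subseteq> \<Omega> \<and> A \<inter> C = {} \<longrightarrow> P (A \<union> C) B = P A B + P C B) \<and>
        P B B = 1) \<and>
     (\<forall>A B C. A \<subseteq> \<Omega> \<and> B \<subseteq> \<Omega> \<and> C \<subseteq> \<Omega> \<and> C \<inter> B \<noteq> {} \<longrightarrow>
        P (A \<inter> C) B = P A (C \<inter> B) * P C B)"

definition cond_mass :: "'n set \<Rightarrow> ('n \<Rightarrow> 'n set) \<Rightarrow> ('n \<Rightarrow> 'v set)
    \<Rightarrow> (('n \<Rightarrow> 'v) set \<Rightarrow> ('n \<Rightarrow> 'v) set \<Rightarrow> real) \<Rightarrow> 'n \<Rightarrow> ('n \<Rightarrow> 'v) \<Rightarrow> 'v \<Rightarrow> real" where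
  "cond_mass G par X P s x = (\<lambda>v. if v \<in> X s
       then P (event G X {s} (x(s := v))) (event G X (nondesc G par s) x) else 0)"

(* irrelevant natural extension F^irr_G; M s y is the local model M_{s|y}
   for y an assignment of the parents (extensional to par s) *)
definition irr_ext :: "'n set \<Rightarrow> ('n \<Rightarrow> 'n set) \<Rightarrow> ('n \<Rightarrow> 'v set)
    \<Rightarrow> ('n \<Rightarrow> ('n \<Rightarrow> 'v) \<Rightarrow> ('v \<Rightarrow> real) set)
    \<Rightarrow> (('n \<Rightarrow> 'v) set \<Rightarrow> ('n \<Rightarrow> 'v) set \<Rightarrow> real) set" where
  "irr_ext G par X M = {P. full_cond_prob (PiE G X) P \<and>
      (\<forall>s\<in>G. \<forall>x\<in>PiE G X. cond_mass G par X P s x \<in> M s (restrict x (par s)))}"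

definition lower_irr :: "'n set \<Rightarrow> ('n \<Rightarrow> 'n set) \<Rightarrow> ('n \<Rightarrow> 'v set)
    \<Rightarrow> ('n \<Rightarrow> ('n \<Rightarrow> 'v) \<Rightarrow> ('v \<Rightarrow> real) set) \<Rightarrow> ('n \<Rightarrow> 'v) set \<Rightarrow> real" where
  "lower_irr G par X M A = Inf ((\<lambda>P. P A (PiE G X)) ` irr_ext G par X M)"

definition upper_irr :: "'n set \<Rightarrow> ('n \<Rightarrow> 'n set) \<Rightarrow> ('n \<Rightarrow> 'v set)
    \<Rightarrow> ('n \<Rightarrow> ('n \<Rightarrow> 'v) \<Rightarrow> ('v \<Rightarrow> real) set) \<Rightarrow> ('n \<Rightarrow> 'v) set \<Rightarrow> real" where
  "upper_irr G par X M A = Sup ((\<lambda>P. P A (PiE G X)) ` irr_ext G par X M)"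

end

theory Submission
  imports Defs
begin



lemma fcp_D:
  assumes "full_cond_prob Om P" "B \<subseteq> Om" "B \<noteq> {}"
  shows "(\<forall>A. A \<subseteq> Om \<longrightarrow> 0 \<le> P A B) \<and> P Om B = 1 \<and>
        (\<forall>A C. A \<subseteq> Om \<and> C \<subseteq> Om \<and> A \<inter> C = {} \<longrightarrow> P (A \<union> C) B = P A B + P C B) \<and>
        P B B = 1"
  using assms(1) unfolding full_cond_prob_def
  apply (elim conjE)
  apply (erule allE[of _ B])
  using assms(2,3) by simp
lemma fcp_nonneg: "full_cond_prob Om P \<Longrightarrow> B \<subseteq> Om \<Longrightarrow> B \<noteq> {} \<Longrightarrow> A \<subseteq> Om \<Longrightarrow> 0 \<le> P A B"
  using fcp_D by metis
lemma fcp_add: "full_cond_prob Om P \<Longrightarrow> B \<subseteq> Om \<Longrightarrow> B \<noteq> {} \<Longrightarrow> A \<subseteq> Om \<Longrightarrow> C \<subseteq> Om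
   \<Longrightarrow> A \<inter> C = {} \<Longrightarrow> P (A \<union> C) B = P A B + P C B"
  by (drule fcp_D) auto
lemma fcp_self: "full_cond_prob Om P \<Longrightarrow> B \<subseteq> Om \<Longrightarrow> B \<noteq> {} \<Longrightarrow> P B B = 1"
  by (drule fcp_D) auto
lemma fcp_Om: "full_cond_prob Om P \<Longrightarrow> B \<subseteq> Om \<Longrightarrow> B \<noteq> {} \<Longrightarrow> P Om B = 1"
  by (drule fcp_D) auto
lemma fcp_mult:
  assumes "full_cond_prob Om P" "A \<subseteq> Om" "B \<subseteq> Om" "C \<subseteq> Om" "C \<inter> B \<noteq> {}"
  shows "P (A \<inter> C) B = P A (C \<inter> B) * P C B"
proof -
  have "\<forall>A B C. A \<subseteq> Om \<and> B \<subseteq> Om \<and> C \<subseteq> Om \<and> C \<inter> B \<noteq> {} \<longrightarrow>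
        P (A \<inter> C) B = P A (C \<inter> B) * P C B"
    using assms(1) unfolding full_cond_prob_def by (rule conjunct2)
  from this[rule_format, of A B C] show ?thesis using assms by simp
qed

lemma fcp_empty:
  assumes P: "full_cond_prob Om P" and B: "B \<subseteq> Om" "B \<noteq> {}"
  shows "P {} B = 0"
proof -
  have "P ({} \<union> {}) B = P {} B + P {} B" using fcp_add[OF P B] by blast
  thus ?thesis by simp
qed

lemma fcp_Union:
  assumes P: "full_cond_prob Om P" and B: "B \<subseteq> Om" "B \<noteq> {}"
  shows "finite F \<Longrightarrow> (\<And>E. E \<in> F \<Longrightarrow> h E \<subseteq> E) \<Longrightarrow> (\<And>E. E \<in> F \<Longrightarrow> E \<subseteq> Om)
    \<Longrightarrow> (\<And>E E'. E \<in> F \<Longrightarrow> E' \<in> F \<Longrightarrow> E \<noteq> E' \<Longrightarrow> E \<inter> E' = {})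
    \<Longrightarrow> P (\<Union>E\<in>F. h E) B = (\<Sum>E\<in>F. P (h E) B)"
proof (induction F rule: finite_induct)
  case empty
  then show ?case using fcp_empty[OF P B] by simp
next
  case (insert E F)
  have d: "h E \<inter> (\<Union>E'\<in>F. h E') = {}"
  proof -
    have "h E \<inter> h E' = {}" if "E' \<in> F" for E'
      using insert.prems(1)[of E] insert.prems(1)[of E'] insert.prems(3)[of E E'] that insert.hyps(2)
      by auto
    thus ?thesis by blast
  qed
  have s1: "h E \<subseteq> Om" using insert.prems(1,2) by blast
  have s2: "(\<Union>E'\<in>F. h E') \<subseteq> Om" using insert.prems(1,2) by blast
  have "P (\<Union>E'\<in>insert E F. h E') B = P (h E \<union> (\<Union>E'\<in>F. h E')) B" by simp
  also have "\<dots> = P (h E) B + P (\<Union>E'\<in>F. h E') B"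
    using fcp_add[OF P B s1 s2 d] .
  also have "P (\<Union>E'\<in>F. h E') B = (\<Sum>E'\<in>F. P (h E') B)"
    using insert by (intro insert.IH) auto
  also have "P (h E) B + (\<Sum>E'\<in>F. P (h E') B) = (\<Sum>E'\<in>insert E F. P (h E') B)"
    using insert.hyps by (simp add: sum.insert)
  finally show ?case .
qed

lemma pmf_le1:
  assumes "is_pmf_on A p" "finite A" shows "p v \<le> 1"
proof (cases "v \<in> A")
  case True
  have "p v \<le> sum p A" using assms True by (intro member_le_sum) (auto simp: is_pmf_on_def)
  thus ?thesis using assms by (simp add: is_pmf_on_def)
next
  case False thus ?thesis using assms by (simp add: is_pmf_on_def)
qed

lemma pmf_nonneg: "is_pmf_on A p \<Longrightarrow> 0 \<le> p v"
  by (cases "v \<in> A") (auto simp: is_pmf_on_def)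

lemma attain:
  fixes Mm :: "('v \<Rightarrow> real) set"
  assumes lm: "local_model A Mm" and fin: "finite A"
  shows "\<exists>p\<in>Mm. \<forall>p'\<in>Mm. p v \<le> p' v" "\<exists>p\<in>Mm. \<forall>p'\<in>Mm. p' v \<le> p v"
proof -
  define K where "K = PiE (UNIV::'v set) (\<lambda>w. if w \<in> A then {0..1::real} else {0})"
  have "compactin (product_topology (\<lambda>i. euclidean) UNIV) K"
    unfolding K_def by (subst compactin_PiE) auto
  hence cK: "compact K" by (simp add: euclidean_product_topology)
  have sub: "Mm \<subseteq> K"
  proof
    fix p assume p: "p \<in> Mm"
    hence pm: "is_pmf_on A p" using lm by (auto simp: local_model_def)
    have "p w \<le> 1" for w using pmf_le1[OF pm fin] .
    thus "p \<in> K" using pm pmf_nonneg[OF pm] by (auto simp: K_def is_pmf_on_def PiE_def Pi_def)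
  qed
  have "compact (K \<inter> Mm)" using cK lm by (intro compact_Int_closed) (auto simp: local_model_def)
  hence cM: "compact Mm" using sub by (simp add: Int_absorb1)
  have ne: "Mm \<noteq> {}" using lm by (simp add: local_model_def)
  have ct: "continuous_on Mm (\<lambda>p. p v)"
    by (rule continuous_on_subset[OF continuous_on_product_coordinates]) simp
  show "\<exists>p\<in>Mm. \<forall>p'\<in>Mm. p v \<le> p' v" using continuous_attains_inf[OF cM ne ct] by blast
  show "\<exists>p\<in>Mm. \<forall>p'\<in>Mm. p' v \<le> p v" using continuous_attains_sup[OF cM ne ct] by blast
qed

lemma lm_bounds:
  assumes lm: "local_model A Mm" and fin: "finite A" and p: "p \<in> Mm"
  shows "lowerP Mm v \<le> p v" "p v \<le> upperP Mm v" "0 \<le> lowerP Mm v"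
proof -
  have pm: "\<And>p. p \<in> Mm \<Longrightarrow> is_pmf_on A p" using lm by (auto simp: local_model_def)
  have bb: "bdd_below ((\<lambda>p. p v) ` Mm)" using pm by (auto intro!: bdd_belowI[of _ 0] intro: pmf_nonneg)
  have ba: "bdd_above ((\<lambda>p. p v) ` Mm)" using pm fin by (auto intro!: bdd_aboveI[of _ 1] intro: pmf_le1)
  show "lowerP Mm v \<le> p v" unfolding lowerP_def using bb p by (intro cInf_lower) auto
  show "p v \<le> upperP Mm v" unfolding upperP_def using ba p by (intro cSup_upper) auto
  show "0 \<le> lowerP Mm v" unfolding lowerP_def using p
    by (intro cInf_greatest) (auto intro: pmf_nonneg[OF pm])
qed

locale bn =
  fixes G :: "'n set" and par :: "'n \<Rightarrow> 'n set" and X :: "'n \<Rightarrow> 'v set"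
    and M :: "'n \<Rightarrow> ('n \<Rightarrow> 'v) \<Rightarrow> ('v \<Rightarrow> real) set"
  assumes dag: "is_dag G par"
    and states: "\<And>s. s \<in> G \<Longrightarrow> finite (X s) \<and> X s \<noteq> {}"
    and models: "\<And>s y. s \<in> G \<Longrightarrow> y \<in> PiE (par s) X \<Longrightarrow> local_model (X s) (M s y)"
begin

abbreviation "Om \<equiv> PiE G X"

lemma finG: "finite G" using dag by (simp add: is_dag_def)
lemma parG: "s \<in> G \<Longrightarrow> par s \<subseteq> G" using dag by (simp add: is_dag_def)
lemma acyc: "acyclic (edges G par)" using dag by (simp add: is_dag_def)
lemma edge_iff: "(p,s) \<in> edges G par \<longleftrightarrow> s \<in> G \<and> p \<in> par s" by (simp add: edges_def)
lemma fin_edges: "finite (edges G par)"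
proof -
  have "edges G par \<subseteq> G \<times> G" using parG by (auto simp: edges_def)
  thus ?thesis using finG by (meson finite_SigmaI finite_subset)
qed
lemma finOm: "finite Om" using finG states by (intro finite_PiE) auto

lemma par_not_self: "s \<in> G \<Longrightarrow> s \<notin> par s"
proof
  assume "s \<in> G" "s \<in> par s"
  hence "(s,s) \<in> (edges G par)\<^sup>+" by (simp add: edge_iff r_into_trancl')
  thus False using acyc by (simp add: acyclic_def)
qed

lemma sink_exists:
  assumes "U \<subseteq> G" "U \<noteq> {}" shows "\<exists>u\<in>U. \<forall>t\<in>U. u \<notin> par t"
proof -
  have wf: "wf ((edges G par)\<inverse>)" by (rule finite_acyclic_wf_converse[OF fin_edges acyc])
  from assms obtain a where "a \<in> U" by auto
  from wfE_min[OF wf this] obtain u where "u \<in> U" "\<And>y. (y,u) \<in> (edges G par)\<inverse> \<Longrightarrow> y \<notin> U" by blast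
  thus ?thesis using assms(1) by (auto simp: edge_iff)
qed

lemma max_exists:
  assumes "S \<noteq> {}" shows "\<exists>s\<in>S. \<forall>t\<in>S. (s,t) \<notin> (edges G par)\<^sup>+"
proof -
  have wf: "wf (((edges G par)\<inverse>)\<^sup>+)"
    by (rule wf_trancl[OF finite_acyclic_wf_converse[OF fin_edges acyc]])
  from assms obtain a where "a \<in> S" by auto
  from wfE_min[OF wf this] obtain u where "u \<in> S" "\<And>y. (y,u) \<in> ((edges G par)\<inverse>)\<^sup>+ \<Longrightarrow> y \<notin> S" by blast
  thus ?thesis by (auto simp: trancl_converse)
qed

lemma desc_G: "desc G par s \<subseteq> G"
  by (auto simp: desc_def edge_iff dest!: tranclD2)

lemma self_not_desc: "s \<notin> desc G par s" using acyc by (auto simp: desc_def acyclic_def)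

lemma par_nondesc: assumes "s \<in> G" shows "par s \<subseteq> nondesc G par s"
proof
  fix p assume p: "p \<in> par s"
  have e: "(p,s) \<in> edges G par" using p assms by (simp add: edge_iff)
  have "p \<noteq> s" using par_not_self assms p by auto
  moreover have "p \<notin> desc G par s"
  proof
    assume "p \<in> desc G par s"
    hence "(s,p) \<in> (edges G par)\<^sup>+" by (simp add: desc_def)
    hence "(s,s) \<in> (edges G par)\<^sup>+" using e by auto
    thus False using acyc by (simp add: acyclic_def)
  qed
  ultimately show "p \<in> nondesc G par s" using parG[OF assms] p by (auto simp: nondesc_def)
qed

lemma nondesc_closed: assumes "t \<in> nondesc G par s" shows "par t \<subseteq> nondesc G par s"
proof
  fix p assume p: "p \<in> par t"
  have tG: "t \<in> G" and ts: "t \<noteq> s" and td: "t \<notin> desc G par s" using assms by (auto simp: nondesc_def)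
  have e: "(p,t) \<in> edges G par" using p tG by (simp add: edge_iff)
  have "p \<noteq> s" using e td by (auto simp: desc_def)
  moreover have "p \<notin> desc G par s" using e td by (auto simp: desc_def intro: trancl_into_trancl)
  ultimately show "p \<in> nondesc G par s" using parG[OF tG] p by (auto simp: nondesc_def)
qed

lemma restr_in: "z \<in> Om \<Longrightarrow> t \<in> G \<Longrightarrow> restrict z (par t) \<in> PiE (par t) X"
  using parG by (auto simp: PiE_def Pi_def extensional_def)

lemma event_sub: "event G X S y \<subseteq> Om" by (auto simp: event_def)

lemma cyl_bounds:
  assumes P: "P \<in> irr_ext G par X M" and s: "s \<in> G" and x: "x \<in> Om"
   and B: "B \<subseteq> Om" "B \<noteq> {}"
   and cyl: "\<And>y. y \<in> B \<Longrightarrow> event G X (nondesc G par s) y \<subseteq> B \<and> restrict y (par s) = restrict x (par s)"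
  shows "lowerP (M s (restrict x (par s))) (x s) \<le> P (event G X {s} x) B \<and>
         P (event G X {s} x) B \<le> upperP (M s (restrict x (par s))) (x s)"
proof -
  define N where "N = nondesc G par s"
  define A where "A = event G X {s} x"
  define F where "F = (\<lambda>y. event G X N y) ` B"
  define lo where "lo = lowerP (M s (restrict x (par s))) (x s)"
  define up where "up = upperP (M s (restrict x (par s))) (x s)"
  have fcp: "full_cond_prob Om P" using P by (simp add: irr_ext_def)
  have finF: "finite F" unfolding F_def using B finOm by (meson finite_imageI finite_subset)
  have FB: "E \<subseteq> B" if "E \<in> F" for E using that cyl unfolding F_def N_def by auto
  have Fne: "E \<noteq> {}" if E: "E \<in> F" for E
  proof -
    obtain y where "y \<in> B" "E = event G X N y" using E unfolding F_def by auto
    hence "y \<in> E" using B by (auto simp: event_def)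
    thus ?thesis by auto
  qed
  have disj: "E \<inter> E' = {}" if EE: "E \<in> F" "E' \<in> F" "E \<noteq> E'" for E E'
  proof (rule ccontr)
    assume "E \<inter> E' \<noteq> {}"
    then obtain z where z: "z \<in> E" "z \<in> E'" by auto
    obtain y1 y2 where "E = event G X N y1" "E' = event G X N y2" using EE unfolding F_def by auto
    moreover have "event G X N y1 = event G X N y2" using z calculation by (auto simp: event_def)
    ultimately show False using EE by simp
  qed
  have UF: "(\<Union>E\<in>F. E) = B"
  proof
    show "(\<Union>E\<in>F. E) \<subseteq> B" using FB by blast
    show "B \<subseteq> (\<Union>E\<in>F. E)" unfolding F_def using B by (auto simp: event_def)
  qed
  have PBB: "P B B = 1" using fcp_self[OF fcp B] .
  have Asub: "A \<subseteq> Om" unfolding A_def by (rule event_sub)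
  have "P (A \<inter> B) B = P A (B \<inter> B) * P B B"
    using fcp_mult[OF fcp Asub B(1) B(1)] B by simp
  hence PA: "P A B = P (A \<inter> B) B" using PBB by simp
  have "A \<inter> B = (\<Union>E\<in>F. A \<inter> E)" using UF by blast
  moreover have "P (\<Union>E\<in>F. A \<inter> E) B = (\<Sum>E\<in>F. P (A \<inter> E) B)"
    apply (rule fcp_Union[OF fcp B finF]) using FB B disj by auto
  ultimately have "P (A \<inter> B) B = (\<Sum>E\<in>F. P (A \<inter> E) B)" by simp
  also have "\<dots> = (\<Sum>E\<in>F. P A E * P E B)"
  proof (rule sum.cong)
    fix E assume E: "E \<in> F"
    have "E \<inter> B = E" using FB E by blast
    moreover have "E \<subseteq> Om" using FB[OF E] B by blast
    ultimately show "P (A \<inter> E) B = P A E * P E B"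
      using fcp_mult[OF fcp Asub B(1), of E] Fne[OF E] by simp
  qed simp
  finally have PAsum: "P A B = (\<Sum>E\<in>F. P A E * P E B)" using PA by simp
  have "P (\<Union>E\<in>F. E) B = (\<Sum>E\<in>F. P E B)"
    apply (rule fcp_Union[OF fcp B finF]) using FB B disj by auto
  hence sum1: "(\<Sum>E\<in>F. P E B) = 1" using UF PBB by simp
  have nn: "0 \<le> P E B" if "E \<in> F" for E using fcp_nonneg[OF fcp B] FB[OF that] B by blast
  have bnd: "lo \<le> P A E \<and> P A E \<le> up" if E: "E \<in> F" for E
  proof -
    obtain y where y: "y \<in> B" "E = event G X N y" using E unfolding F_def by auto
    have yO: "y \<in> Om" using y B by auto
    have cm: "cond_mass G par X P s y \<in> M s (restrict y (par s))" using P s yO by (simp add: irr_ext_def)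
    have xs: "x s \<in> X s" using x s by auto
    have ev: "event G X {s} (y(s := x s)) = A" unfolding A_def event_def by auto
    have eq: "cond_mass G par X P s y (x s) = P A E" using xs ev y by (simp add: cond_mass_def N_def)
    have "restrict y (par s) = restrict x (par s)" using cyl y(1) by blast
    hence cm': "cond_mass G par X P s y \<in> M s (restrict x (par s))" using cm by simp
    have lm: "local_model (X s) (M s (restrict x (par s)))" using models s restr_in x by blast
    have fX: "finite (X s)" using states s by blast
    show ?thesis using lm_bounds(1,2)[OF lm fX cm', of "x s"] eq
      unfolding lo_def up_def by simp
  qed
  have "lo = (\<Sum>E\<in>F. lo * P E B)" using sum1 by (simp add: sum_distrib_left[symmetric])
  also have "\<dots> \<le> (\<Sum>E\<in>F. P A E * P E B)"
    using bnd nn by (intro sum_mono mult_right_mono) auto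
  finally have l: "lo \<le> P A B" using PAsum by simp
  have "(\<Sum>E\<in>F. P A E * P E B) \<le> (\<Sum>E\<in>F. up * P E B)"
    using bnd nn by (intro sum_mono mult_right_mono) auto
  also have "\<dots> = up" using sum1 by (simp add: sum_distrib_left[symmetric])
  finally have u: "P A B \<le> up" using PAsum by simp
  show ?thesis using l u unfolding lo_def up_def A_def by simp
qed

end


context bn begin

lemma low_nonneg: assumes "t \<in> G" "x \<in> Om"
  shows "0 \<le> lowerP (M t (restrict x (par t))) (x t)"
    and "lowerP (M t (restrict x (par t))) (x t) \<le> upperP (M t (restrict x (par t))) (x t)"
proof -
  have lm: "local_model (X t) (M t (restrict x (par t)))" using models assms restr_in by blast
  then obtain p where p: "p \<in> M t (restrict x (par t))" by (auto simp: local_model_def)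
  have fX: "finite (X t)" using states assms by blast
  show "0 \<le> lowerP (M t (restrict x (par t))) (x t)" using lm_bounds(3)[OF lm fX p] .
  show "lowerP (M t (restrict x (par t))) (x t) \<le> upperP (M t (restrict x (par t))) (x t)"
    using lm_bounds(1,2)[OF lm fX p, of "x t"] by linarith
qed

lemma chain:
  assumes P: "P \<in> irr_ext G par X M" and x: "x \<in> Om"
  shows "S \<subseteq> G \<Longrightarrow> (\<forall>t\<in>S. par t \<subseteq> S) \<Longrightarrow>
    (\<Prod>t\<in>S. lowerP (M t (restrict x (par t))) (x t)) \<le> P (event G X S x) Om \<and>
    P (event G X S x) Om \<le> (\<Prod>t\<in>S. upperP (M t (restrict x (par t))) (x t))"
proof (induction "card S" arbitrary: S rule: less_induct)
  case less
  have fcp: "full_cond_prob Om P" using P by (simp add: irr_ext_def)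
  have One: "Om \<noteq> {}" using x by auto
  show ?case
  proof (cases "S = {}")
    case True
    have "event G X {} x = Om" by (auto simp: event_def)
    thus ?thesis using True fcp_self[OF fcp order_refl One] by simp
  next
    case False
    obtain s where s: "s \<in> S" and smax: "\<forall>t\<in>S. (s,t) \<notin> (edges G par)\<^sup>+"
      using max_exists[OF False] by blast
    define S' where "S' = S - {s}"
    have finS: "finite S" using less.prems(1) finG finite_subset by blast
    have sG: "s \<in> G" using s less.prems(1) by blast
    have cS': "card S' < card S" unfolding S'_def by (rule card_Diff1_less[OF finS s])
    have S'G: "S' \<subseteq> G" using less.prems(1) S'_def by blast
    have anc': "\<forall>t\<in>S'. par t \<subseteq> S'"
    proof
      fix t assume t: "t \<in> S'"
      have "par t \<subseteq> S" using less.prems(2) t S'_def by blast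
      moreover have "s \<notin> par t"
      proof
        assume "s \<in> par t"
        hence "(s,t) \<in> edges G par" using t S'G by (auto simp: edge_iff)
        thus False using smax t S'_def by blast
      qed
      ultimately show "par t \<subseteq> S'" unfolding S'_def by blast
    qed
    have IH: "(\<Prod>t\<in>S'. lowerP (M t (restrict x (par t))) (x t)) \<le> P (event G X S' x) Om \<and>
      P (event G X S' x) Om \<le> (\<Prod>t\<in>S'. upperP (M t (restrict x (par t))) (x t))"
      using less.hyps[OF cS' S'G anc'] .
    define B where "B = event G X S' x"
    have Bsub: "B \<subseteq> Om" unfolding B_def by (rule event_sub)
    have xB: "x \<in> B" using x unfolding B_def event_def by auto
    have Bne: "B \<noteq> {}" using xB by auto
    have parS': "par s \<subseteq> S'"
      using less.prems(2) s par_not_self[OF sG] unfolding S'_def by blast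
    have S'N: "S' \<subseteq> nondesc G par s"
      using S'G smax unfolding S'_def nondesc_def desc_def by blast
    have cyl: "event G X (nondesc G par s) y \<subseteq> B \<and> restrict y (par s) = restrict x (par s)"
      if y: "y \<in> B" for y
    proof
      show "event G X (nondesc G par s) y \<subseteq> B" using y S'N unfolding B_def event_def by auto
      show "restrict y (par s) = restrict x (par s)" using y parS' unfolding B_def event_def
        by (auto simp: restrict_def fun_eq_iff)
    qed
    have bds: "lowerP (M s (restrict x (par s))) (x s) \<le> P (event G X {s} x) B \<and>
         P (event G X {s} x) B \<le> upperP (M s (restrict x (par s))) (x s)"
      using cyl_bounds[OF P sG x Bsub Bne cyl] by blast
    have evS: "event G X S x = event G X {s} x \<inter> B" unfolding B_def S'_def event_def using s by auto
    have "P (event G X {s} x \<inter> B) Om = P (event G X {s} x) (B \<inter> Om) * P B Om"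
      using fcp_mult[OF fcp event_sub order_refl Bsub] xB Bsub by blast
    hence mult: "P (event G X S x) Om = P (event G X {s} x) B * P B Om"
      using evS Bsub by (simp add: Int_absorb2)
    define lo where "lo = lowerP (M s (restrict x (par s))) (x s)"
    define up where "up = upperP (M s (restrict x (par s))) (x s)"
    define L' where "L' = (\<Prod>t\<in>S'. lowerP (M t (restrict x (par t))) (x t))"
    define U' where "U' = (\<Prod>t\<in>S'. upperP (M t (restrict x (par t))) (x t))"
    define a where "a = P (event G X {s} x) B"
    define b where "b = P B Om"
    have lo0: "0 \<le> lo" unfolding lo_def using low_nonneg(1)[OF sG x] .
    have L'0: "0 \<le> L'" unfolding L'_def using low_nonneg(1) x S'G by (intro prod_nonneg) blast
    have h1: "lo \<le> a" "a \<le> up" using bds unfolding lo_def up_def a_def by auto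
    have h2: "L' \<le> b" "b \<le> U'" using IH unfolding L'_def U'_def b_def B_def by auto
    have "lo * L' \<le> a * b" using h1 h2 lo0 L'0 by (intro mult_mono) auto
    moreover have "a * b \<le> up * U'" using h1 h2 lo0 L'0 by (intro mult_mono) auto
    moreover have "(\<Prod>t\<in>S. lowerP (M t (restrict x (par t))) (x t)) = lo * L'"
      unfolding lo_def L'_def S'_def using prod.remove[OF finS s] .
    moreover have "(\<Prod>t\<in>S. upperP (M t (restrict x (par t))) (x t)) = up * U'"
      unfolding up_def U'_def S'_def using prod.remove[OF finS s] .
    ultimately show ?thesis using mult unfolding a_def b_def by simp
  qed
qed

lemma bounds_all:
  assumes P: "P \<in> irr_ext G par X M" and x: "x \<in> Om"
  shows "(\<Prod>t\<in>G. lowerP (M t (restrict x (par t))) (x t)) \<le> P {x} Om \<and>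
    P {x} Om \<le> (\<Prod>t\<in>G. upperP (M t (restrict x (par t))) (x t))"
proof -
  have "event G X G x = {x}" using x by (auto simp: event_def intro: PiE_ext)
  thus ?thesis using chain[OF P x order_refl] parG by simp
qed

end



locale bnq = bn G par X M
  for G :: "'n set" and par :: "'n \<Rightarrow> 'n set" and X :: "'n \<Rightarrow> 'v set"
    and M :: "'n \<Rightarrow> ('n \<Rightarrow> 'v) \<Rightarrow> ('v \<Rightarrow> real) set" +
  fixes q :: "'n \<Rightarrow> ('n \<Rightarrow> 'v) \<Rightarrow> 'v \<Rightarrow> real"
  assumes qpmf: "\<And>s y. s \<in> G \<Longrightarrow> y \<in> PiE (par s) X \<Longrightarrow> is_pmf_on (X s) (q s y)"
begin

definition "g t z = q t (restrict z (par t)) (z t)"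
definition "Zs z = {t\<in>G. g t z = 0}"
definition "kk z = card (Zs z)"
definition "cc z = (\<Prod>t\<in>G - Zs z. g t z)"
definition "Lset B = {z\<in>B. \<forall>z'\<in>B. kk z \<le> kk z'}"
definition "PP A B = (\<Sum>z\<in>A \<inter> Lset B. cc z) / (\<Sum>z\<in>Lset B. cc z)"
definition "EE U y = {z\<in>Om. \<forall>t\<in>G-U. z t = y t}"

lemma g_nonneg: "t \<in> G \<Longrightarrow> z \<in> Om \<Longrightarrow> 0 \<le> g t z"
  unfolding g_def by (rule pmf_nonneg[OF qpmf[OF _ restr_in]])

lemma cc_pos: assumes "z \<in> Om" shows "0 < cc z"
  unfolding cc_def
proof (rule prod_pos)
  fix t assume "t \<in> G - Zs z"
  thus "0 < g t z" using g_nonneg[of t z] assms by (force simp: Zs_def)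
qed

lemma Lset_sub: "Lset B \<subseteq> B" by (auto simp: Lset_def)

lemma Lset_ne: assumes "finite B" "B \<noteq> {}" shows "Lset B \<noteq> {}"
proof -
  have "Min (kk ` B) \<in> kk ` B" using assms by (intro Min_in) auto
  then obtain z where z: "z \<in> B" "kk z = Min (kk ` B)" by auto
  have "\<forall>z'\<in>B. kk z \<le> kk z'" using z assms by auto
  thus ?thesis using z unfolding Lset_def by auto
qed

lemma S_pos: assumes "B \<subseteq> Om" "B \<noteq> {}" "Lset B \<inter> C \<noteq> {}"
  shows "0 < (\<Sum>z\<in>Lset B \<inter> C. cc z)"
proof (rule sum_pos)
  show "finite (Lset B \<inter> C)" using assms(1) finOm Lset_sub by (meson finite_Int finite_subset)
  show "Lset B \<inter> C \<noteq> {}" by fact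
  show "\<And>i. i \<in> Lset B \<inter> C \<Longrightarrow> 0 < cc i" using cc_pos assms(1) Lset_sub by blast
qed

lemma S_pos': assumes "B \<subseteq> Om" "B \<noteq> {}" shows "0 < (\<Sum>z\<in>Lset B. cc z)"
  using S_pos[OF assms, of UNIV] Lset_ne[OF finite_subset[OF assms(1) finOm] assms(2)] by simp

lemma PP_fcp: "full_cond_prob Om PP"
  unfolding full_cond_prob_def
proof (intro conjI allI impI)
  fix B assume B: "B \<subseteq> Om \<and> B \<noteq> {}"
  have pos: "0 < (\<Sum>z\<in>Lset B. cc z)" using S_pos' B by blast
  have finL: "finite (Lset B)" using B finOm Lset_sub by (meson finite_subset)
  show "0 \<le> PP A B" if "A \<subseteq> Om" for A
  proof -
    have ccnn: "\<And>z. z \<in> Lset B \<Longrightarrow> 0 \<le> cc z" using cc_pos Lset_sub B by (meson less_imp_le subsetD)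
    show "0 \<le> PP A B" unfolding PP_def using ccnn
      by (intro divide_nonneg_nonneg sum_nonneg) auto
  qed
  have LB: "Lset B \<subseteq> Om" using B Lset_sub by blast
  show "PP Om B = 1" unfolding PP_def using pos LB by (simp add: Int_absorb1)
  show "PP B B = 1" unfolding PP_def using pos Lset_sub[of B] by (simp add: Int_absorb1)
  show "PP (A \<union> C) B = PP A B + PP C B" if AC: "A \<subseteq> Om \<and> C \<subseteq> Om \<and> A \<inter> C = {}" for A C
  proof -
    have "(A \<union> C) \<inter> Lset B = (A \<inter> Lset B) \<union> (C \<inter> Lset B)" by blast
    hence "(\<Sum>z\<in>(A \<union> C) \<inter> Lset B. cc z) = (\<Sum>z\<in>A \<inter> Lset B. cc z) + (\<Sum>z\<in>C \<inter> Lset B. cc z)"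
      using AC finL by (simp add: sum.union_disjoint disjoint_iff)
    thus "PP (A \<union> C) B = PP A B + PP C B" unfolding PP_def by (simp add: add_divide_distrib)
  qed
next
  fix A B C assume H: "A \<subseteq> Om \<and> B \<subseteq> Om \<and> C \<subseteq> Om \<and> C \<inter> B \<noteq> {}"
  hence B: "B \<subseteq> Om" "B \<noteq> {}" and CB: "C \<inter> B \<subseteq> Om" "C \<inter> B \<noteq> {}" by auto
  show "PP (A \<inter> C) B = PP A (C \<inter> B) * PP C B"
  proof (cases "Lset B \<inter> C = {}")
    case True
    have "(A \<inter> C) \<inter> Lset B = {}" "C \<inter> Lset B = {}" using True by auto
    thus ?thesis unfolding PP_def by simp
  next
    case False
    have LCB: "Lset (C \<inter> B) = Lset B \<inter> C"
    proof
      obtain w where w: "w \<in> Lset B" "w \<in> C" using False by auto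
      show "Lset (C \<inter> B) \<subseteq> Lset B \<inter> C"
      proof
        fix z assume z: "z \<in> Lset (C \<inter> B)"
        have "kk z \<le> kk w" using z w unfolding Lset_def by auto
        moreover have "\<forall>z'\<in>B. kk w \<le> kk z'" using w unfolding Lset_def by auto
        ultimately show "z \<in> Lset B \<inter> C" using z unfolding Lset_def by auto
      qed
      show "Lset B \<inter> C \<subseteq> Lset (C \<inter> B)" unfolding Lset_def by auto
    qed
    have p1: "0 < (\<Sum>z\<in>Lset B \<inter> C. cc z)" using S_pos[OF B False] .
    have p2: "0 < (\<Sum>z\<in>Lset B. cc z)" using S_pos'[OF B] .
    have e1: "A \<inter> Lset (C \<inter> B) = (A \<inter> C) \<inter> Lset B" using LCB by auto
    have e2: "C \<inter> Lset B = Lset B \<inter> C" by auto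
    show ?thesis unfolding PP_def LCB e1[unfolded LCB] e2 using p1 p2 by simp
  qed
qed

lemma EE_sub: "EE U y \<subseteq> Om" by (auto simp: EE_def)

lemma EE_empty: "y \<in> Om \<Longrightarrow> EE {} y = {y}"
  by (auto simp: EE_def intro: PiE_ext)

lemma upd_Om: "z \<in> Om \<Longrightarrow> u \<in> G \<Longrightarrow> v \<in> X u \<Longrightarrow> z(u := v) \<in> Om"
  by (auto simp: PiE_def Pi_def extensional_def)

lemma restr_upd: "u \<notin> S \<Longrightarrow> restrict (z(u := v)) S = restrict z S"
  by (auto simp: restrict_def fun_eq_iff)

lemma norm: "U \<subseteq> G \<Longrightarrow> y \<in> Om \<Longrightarrow> (\<Sum>z\<in>EE U y. \<Prod>t\<in>U. g t z) = 1"
proof (induction "card U" arbitrary: U rule: less_induct)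
  case less
  show ?case
  proof (cases "U = {}")
    case True thus ?thesis using EE_empty[OF less.prems(2)] by simp
  next
    case False
    obtain u where u: "u \<in> U" and usink: "\<forall>t\<in>U. u \<notin> par t"
      using sink_exists[OF less.prems(1) False] by blast
    define U' where "U' = U - {u}"
    have finU: "finite U" using less.prems(1) finG finite_subset by blast
    have uG: "u \<in> G" using u less.prems(1) by blast
    have cU': "card U' < card U" unfolding U'_def by (rule card_Diff1_less[OF finU u])
    have U'G: "U' \<subseteq> G" using less.prems(1) unfolding U'_def by blast
    have IH: "(\<Sum>z\<in>EE U' y. \<Prod>t\<in>U'. g t z) = 1" using less.hyps[OF cU' U'G less.prems(2)] .
    have yu: "y u \<in> X u" using less.prems(2) uG by auto
    define h where "h = (\<lambda>(z'::'n\<Rightarrow>'v, v::'v). z'(u := v))"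
    define h' where "h' = (\<lambda>z::'n\<Rightarrow>'v. (z(u := y u), z u))"
    have bij: "bij_betw h (EE U' y \<times> X u) (EE U y)"
    proof (rule bij_betw_byWitness[where f'=h'])
      show "\<forall>a\<in>EE U' y \<times> X u. h' (h a) = a"
      proof
        fix a assume a: "a \<in> EE U' y \<times> X u"
        obtain z' v where av: "a = (z', v)" by (cases a)
        have "z' u = y u" using a av uG unfolding EE_def U'_def by auto
        thus "h' (h a) = a" using av unfolding h_def h'_def by auto
      qed
      show "\<forall>a'\<in>EE U y. h (h' a') = a'" unfolding h_def h'_def by auto
      show "h ` (EE U' y \<times> X u) \<subseteq> EE U y"
      proof
        fix b assume "b \<in> h ` (EE U' y \<times> X u)"
        then obtain z' v where zv: "z' \<in> EE U' y" "v \<in> X u" "b = z'(u := v)"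
          unfolding h_def by auto
        have "z'(u := v) \<in> Om" using upd_Om[OF subsetD[OF EE_sub zv(1)] uG zv(2)] .
        moreover have "\<forall>t\<in>G-U. (z'(u := v)) t = y t" using zv u unfolding EE_def U'_def by auto
        ultimately show "b \<in> EE U y" using zv unfolding EE_def by auto
      qed
      show "h' ` EE U y \<subseteq> EE U' y \<times> X u"
      proof
        fix b assume "b \<in> h' ` EE U y"
        then obtain z where z: "z \<in> EE U y" "b = (z(u := y u), z u)" unfolding h'_def by auto
        have zO: "z \<in> Om" using z EE_sub by blast
        have "z(u := y u) \<in> Om" using upd_Om[OF zO uG yu] .
        moreover have "\<forall>t\<in>G-U'. (z(u := y u)) t = y t" using z unfolding EE_def U'_def by auto
        moreover have "z u \<in> X u" using zO uG by auto
        ultimately show "b \<in> EE U' y \<times> X u" using z unfolding EE_def by auto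
      qed
    qed
    have "(\<Sum>z\<in>EE U y. \<Prod>t\<in>U. g t z) = (\<Sum>a\<in>EE U' y \<times> X u. \<Prod>t\<in>U. g t (h a))"
      using sum.reindex_bij_betw[OF bij, of "\<lambda>z. \<Prod>t\<in>U. g t z"] by simp
    also have "\<dots> = (\<Sum>z'\<in>EE U' y. \<Sum>v\<in>X u. \<Prod>t\<in>U. g t (z'(u := v)))"
      unfolding h_def sum.cartesian_product by (rule sum.cong[OF refl]) (auto split: prod.splits)
    also have "\<dots> = (\<Sum>z'\<in>EE U' y. \<Prod>t\<in>U'. g t z')"
    proof (rule sum.cong[OF refl])
      fix z' assume z': "z' \<in> EE U' y"
      have zO: "z' \<in> Om" using z' EE_sub by blast
      have "(\<Sum>v\<in>X u. \<Prod>t\<in>U. g t (z'(u := v))) =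
            (\<Sum>v\<in>X u. q u (restrict z' (par u)) v * (\<Prod>t\<in>U'. g t z'))"
      proof (rule sum.cong[OF refl])
        fix v assume v: "v \<in> X u"
        have "(\<Prod>t\<in>U. g t (z'(u := v))) = g u (z'(u := v)) * (\<Prod>t\<in>U'. g t (z'(u := v)))"
          unfolding U'_def using prod.remove[OF finU u] .
        also have "g u (z'(u := v)) = q u (restrict z' (par u)) v"
          unfolding g_def by (simp only: restr_upd[OF par_not_self[OF uG]] fun_upd_same)
        also have "(\<Prod>t\<in>U'. g t (z'(u := v))) = (\<Prod>t\<in>U'. g t z')"
        proof (rule prod.cong[OF refl])
          fix t assume t: "t \<in> U'"
          have ut: "u \<notin> par t" "t \<noteq> u" using usink t unfolding U'_def by auto
          have r1: "restrict (z'(u := v)) (par t) = restrict z' (par t)" using restr_upd[OF ut(1)] .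
          have r2: "(z'(u := v)) t = z' t" using ut(2) by simp
          show "g t (z'(u := v)) = g t z'" unfolding g_def r1 r2 ..
        qed
        finally show "(\<Prod>t\<in>U. g t (z'(u := v))) = q u (restrict z' (par u)) v * (\<Prod>t\<in>U'. g t z')" .
      qed
      also have "\<dots> = (\<Sum>v\<in>X u. q u (restrict z' (par u)) v) * (\<Prod>t\<in>U'. g t z')"
        by (simp add: sum_distrib_right)
      also have "\<dots> = (\<Prod>t\<in>U'. g t z')"
        using qpmf[OF uG restr_in[OF zO uG]] by (simp add: is_pmf_on_def)
      finally show "(\<Sum>v\<in>X u. \<Prod>t\<in>U. g t (z'(u := v))) = (\<Prod>t\<in>U'. g t z')" .
    qed
    finally show ?thesis using IH by simp
  qed
qed

end


context bnq begin

lemma gE: assumes "z \<in> EE U y" "t \<in> G - U" "par t \<subseteq> G - U" shows "g t z = g t y"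
proof -
  have "restrict z (par t) = restrict y (par t)" using assms by (auto simp: EE_def restrict_def fun_eq_iff)
  moreover have "z t = y t" using assms by (auto simp: EE_def)
  ultimately show ?thesis by (simp add: g_def)
qed

lemma Lset_EE:
  assumes U: "U \<subseteq> G" and anc: "\<And>t. t \<in> G - U \<Longrightarrow> par t \<subseteq> G - U" and y: "y \<in> Om"
  shows "Lset (EE U y) = {z \<in> EE U y. \<forall>t\<in>U. g t z \<noteq> 0}"
    and "W \<subseteq> EE U y \<Longrightarrow> (\<Sum>z\<in>W \<inter> Lset (EE U y). cc z) = (\<Prod>t\<in>(G-U) - Zs y. g t y) * (\<Sum>z\<in>W. \<Prod>t\<in>U. g t z)"
proof -
  define base where "base = card ((G - U) \<inter> Zs y)"
  have finU: "finite U" using U finG finite_subset by blast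
  have Zz: "Zs z = ((G-U) \<inter> Zs y) \<union> {t\<in>U. g t z = 0}" if "z \<in> EE U y" for z
    using gE[OF that] anc U unfolding Zs_def by auto
  have kz: "kk z = base + card {t\<in>U. g t z = 0}" if "z \<in> EE U y" for z
    unfolding kk_def base_def Zz[OF that] by (rule card_Un_disjoint) (use finG finU in auto)
  have "(\<Sum>z\<in>EE U y. \<Prod>t\<in>U. g t z) = 1" by (rule norm[OF U y])
  then obtain w where w: "w \<in> EE U y" "(\<Prod>t\<in>U. g t w) \<noteq> 0" by (metis sum.neutral zero_neq_one)
  have wpos: "\<forall>t\<in>U. g t w \<noteq> 0" using w(2) finU by auto
  hence e0: "{t\<in>U. g t w = 0} = {}" by auto
  have "card {t\<in>U. g t w = 0} = 0" by (simp only: e0 card.empty)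
  hence kw: "kk w = base" using kz[OF w(1)] by simp
  show L: "Lset (EE U y) = {z \<in> EE U y. \<forall>t\<in>U. g t z \<noteq> 0}"
  proof (rule set_eqI, rule iffI)
    fix z assume z: "z \<in> Lset (EE U y)"
    hence zE: "z \<in> EE U y" and "kk z \<le> kk w" using w(1) unfolding Lset_def by auto
    hence "card {t\<in>U. g t z = 0} = 0" using kz kw by simp
    hence "{t\<in>U. g t z = 0} = {}" using finU by simp
    thus "z \<in> {z \<in> EE U y. \<forall>t\<in>U. g t z \<noteq> 0}" using zE by auto
  next
    fix z assume z: "z \<in> {z \<in> EE U y. \<forall>t\<in>U. g t z \<noteq> 0}"
    hence e0: "{t\<in>U. g t z = 0} = {}" by auto
    have "card {t\<in>U. g t z = 0} = 0" by (simp only: e0 card.empty)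
    hence "kk z = base" using kz z by auto
    moreover have "base \<le> kk z'" if "z' \<in> EE U y" for z' using kz[OF that] by simp
    ultimately show "z \<in> Lset (EE U y)" using z unfolding Lset_def by auto
  qed
  show "(\<Sum>z\<in>W \<inter> Lset (EE U y). cc z) = (\<Prod>t\<in>(G-U) - Zs y. g t y) * (\<Sum>z\<in>W. \<Prod>t\<in>U. g t z)"
    if W: "W \<subseteq> EE U y"
  proof -
    define cN where "cN = (\<Prod>t\<in>(G-U) - Zs y. g t y)"
    have ccz: "cc z = cN * (\<Prod>t\<in>U. g t z)" if z: "z \<in> Lset (EE U y)" for z
    proof -
      have zE: "z \<in> EE U y" and nz: "\<forall>t\<in>U. g t z \<noteq> 0" using z L by auto
      have "Zs z = (G-U) \<inter> Zs y" using Zz[OF zE] nz by auto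
      hence "G - Zs z = ((G-U) - Zs y) \<union> U" using U by auto
      hence "cc z = (\<Prod>t\<in>((G-U) - Zs y) \<union> U. g t z)" unfolding cc_def by simp
      also have "\<dots> = (\<Prod>t\<in>(G-U) - Zs y. g t z) * (\<Prod>t\<in>U. g t z)"
        by (rule prod.union_disjoint) (use finG finU in auto)
      also have "(\<Prod>t\<in>(G-U) - Zs y. g t z) = cN" unfolding cN_def
        using gE[OF zE] anc by (intro prod.cong) auto
      finally show ?thesis .
    qed
    have "(\<Sum>z\<in>W \<inter> Lset (EE U y). cc z) = (\<Sum>z\<in>W \<inter> Lset (EE U y). cN * (\<Prod>t\<in>U. g t z))"
      using ccz by (intro sum.cong) auto
    also have "\<dots> = cN * (\<Sum>z\<in>W \<inter> Lset (EE U y). \<Prod>t\<in>U. g t z)" by (rule sum_distrib_left[symmetric])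
    finally have e1: "(\<Sum>z\<in>W \<inter> Lset (EE U y). cc z) = cN * (\<Sum>z\<in>W \<inter> Lset (EE U y). \<Prod>t\<in>U. g t z)" .
    have e2: "(\<Sum>z\<in>W \<inter> Lset (EE U y). \<Prod>t\<in>U. g t z) = (\<Sum>z\<in>W. \<Prod>t\<in>U. g t z)"
    proof (rule sum.mono_neutral_left)
      show "finite W" using finite_subset[OF subset_trans[OF W EE_sub] finOm] .
      show "W \<inter> Lset (EE U y) \<subseteq> W" by blast
      show "\<forall>i\<in>W - W \<inter> Lset (EE U y). (\<Prod>t\<in>U. g t i) = 0"
      proof
        fix i assume i: "i \<in> W - W \<inter> Lset (EE U y)"
        hence "i \<in> EE U y" "i \<notin> Lset (EE U y)" using W by blast+
        hence "\<exists>t\<in>U. g t i = 0" unfolding L by blast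
        thus "(\<Prod>t\<in>U. g t i) = 0" using finU by (simp add: prod_zero_iff)
      qed
    qed
    show ?thesis using e1 e2 unfolding cN_def by simp
  qed
qed

lemma cN_pos: "y \<in> Om \<Longrightarrow> 0 < (\<Prod>t\<in>(G-U) - Zs y. g t y)"
  using g_nonneg by (intro prod_pos) (force simp: Zs_def)

lemma PP_point: assumes x: "x \<in> Om" shows "PP {x} Om = (\<Prod>t\<in>G. g t x)"
proof -
  have E: "EE G x = Om" by (auto simp: EE_def)
  have anc: "\<And>t. t \<in> G - G \<Longrightarrow> par t \<subseteq> G - G" by simp
  have n: "(\<Sum>z\<in>{x} \<inter> Lset Om. cc z) = (\<Prod>t\<in>G. g t x)"
    using Lset_EE(2)[OF order_refl anc x, of "{x}"] x unfolding E by simp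
  have d: "(\<Sum>z\<in>Om \<inter> Lset Om. cc z) = 1"
    using Lset_EE(2)[OF order_refl anc x, of Om] norm[OF order_refl x] unfolding E by simp
  have "Om \<inter> Lset Om = Lset Om" using Lset_sub by blast
  thus ?thesis unfolding PP_def using n d by simp
qed

lemma cond_mass_PP:
  assumes s: "s \<in> G" and x: "x \<in> Om"
  shows "cond_mass G par X PP s x = q s (restrict x (par s))"
proof
  fix v
  define N where "N = nondesc G par s"
  define D where "D = desc G par s"
  define U where "U = G - N"
  have NG: "N \<subseteq> G" unfolding N_def nondesc_def by blast
  have GU: "G - U = N" unfolding U_def using NG by blast
  have anc: "\<And>t. t \<in> G - U \<Longrightarrow> par t \<subseteq> G - U" unfolding GU N_def by (rule nondesc_closed)
  have UG: "U \<subseteq> G" unfolding U_def by blast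
  have Uins: "U = insert s D" unfolding U_def N_def D_def nondesc_def using s desc_G by blast
  have sD: "s \<notin> D" unfolding D_def by (rule self_not_desc)
  have DG: "D \<subseteq> G" unfolding D_def by (rule desc_G)
  have finD: "finite D" using DG finG finite_subset by blast
  define B where "B = event G X N x"
  have BE: "B = EE U x" unfolding B_def EE_def event_def GU by simp
  define cN where "cN = (\<Prod>t\<in>(G-U) - Zs x. g t x)"
  have cN0: "0 < cN" unfolding cN_def by (rule cN_pos[OF x])
  have den: "(\<Sum>z\<in>Lset B. cc z) = cN"
  proof -
    have "(\<Sum>z\<in>B \<inter> Lset B. cc z) = cN * (\<Sum>z\<in>B. \<Prod>t\<in>U. g t z)"
      using Lset_EE(2)[OF UG anc x, of B] unfolding BE cN_def by simp
    moreover have "B \<inter> Lset B = Lset B" using Lset_sub by blast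
    ultimately show ?thesis using norm[OF UG x] unfolding BE by simp
  qed
  have parN: "par s \<subseteq> N" unfolding N_def by (rule par_nondesc[OF s])
  show "cond_mass G par X PP s x v = q s (restrict x (par s)) v"
  proof (cases "v \<in> X s")
    case False
    thus ?thesis using qpmf[OF s restr_in[OF x s]] by (simp add: cond_mass_def is_pmf_on_def)
  next
    case True
    define x' where "x' = x(s := v)"
    have x'O: "x' \<in> Om" unfolding x'_def by (rule upd_Om[OF x s True])
    define A where "A = event G X {s} x'"
    have GD: "G - D = insert s N" using Uins U_def NG s sD by blast
    have AB: "A \<inter> B = EE D x'"
    proof -
      have "t \<in> N \<Longrightarrow> t \<noteq> s" for t unfolding N_def nondesc_def by blast
      thus ?thesis unfolding A_def B_def EE_def event_def GD x'_def by auto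
    qed
    have gs: "g s z = q s (restrict x (par s)) v" if z: "z \<in> A \<inter> B" for z
    proof -
      have "restrict z (par s) = restrict x (par s)"
        using z parN unfolding B_def event_def by (auto simp: restrict_def fun_eq_iff)
      moreover have "z s = v" using z unfolding A_def event_def x'_def by auto
      ultimately show ?thesis by (simp add: g_def)
    qed
    have "(\<Sum>z\<in>A \<inter> B. \<Prod>t\<in>U. g t z) = (\<Sum>z\<in>A \<inter> B. q s (restrict x (par s)) v * (\<Prod>t\<in>D. g t z))"
    proof (rule sum.cong[OF refl])
      fix z assume z: "z \<in> A \<inter> B"
      show "(\<Prod>t\<in>U. g t z) = q s (restrict x (par s)) v * (\<Prod>t\<in>D. g t z)"
        unfolding Uins using prod.insert[OF finD sD, of "\<lambda>t. g t z"] gs[OF z] by simp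
    qed
    also have "\<dots> = q s (restrict x (par s)) v" 
      unfolding AB using norm[OF DG x'O] by (simp add: sum_distrib_left[symmetric])
    finally have numsum: "(\<Sum>z\<in>A \<inter> B. \<Prod>t\<in>U. g t z) = q s (restrict x (par s)) v" .
    have "A \<inter> Lset B = (A \<inter> B) \<inter> Lset B" using Lset_sub by blast
    hence num: "(\<Sum>z\<in>A \<inter> Lset B. cc z) = cN * q s (restrict x (par s)) v"
      using Lset_EE(2)[OF UG anc x, of "A \<inter> B"] numsum unfolding BE cN_def by simp
    have "cond_mass G par X PP s x v = PP A B"
      using True unfolding cond_mass_def A_def B_def N_def x'_def by simp
    also have "\<dots> = q s (restrict x (par s)) v" unfolding PP_def num den using cN0 by simp
    finally show ?thesis .
  qed
qed

lemma PP_in: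
  assumes "\<And>s y. s \<in> G \<Longrightarrow> y \<in> PiE (par s) X \<Longrightarrow> q s y \<in> M s y"
  shows "PP \<in> irr_ext G par X M"
  unfolding irr_ext_def using PP_fcp cond_mass_PP assms restr_in by auto

end

context bn begin

lemma construct:
  assumes q: "\<And>s y. s \<in> G \<Longrightarrow> y \<in> PiE (par s) X \<Longrightarrow> q s y \<in> M s y" and x: "x \<in> Om"
  shows "\<exists>P\<in>irr_ext G par X M. P {x} Om = (\<Prod>t\<in>G. q t (restrict x (par t)) (x t))"
proof -
  have qp: "\<And>s y. s \<in> G \<Longrightarrow> y \<in> PiE (par s) X \<Longrightarrow> is_pmf_on (X s) (q s y)"
    using q models by (auto simp: local_model_def)
  interpret bnq G par X M q by unfold_locales (rule qp)
  show ?thesis using PP_in[OF q] PP_point[OF x] unfolding g_def by blast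
qed

end



theorem mainTheorem12:
  fixes G :: "'n set" and par :: "'n \<Rightarrow> 'n set" and X :: "'n \<Rightarrow> 'v set"
    and M :: "'n \<Rightarrow> ('n \<Rightarrow> 'v) \<Rightarrow> ('v \<Rightarrow> real) set"
  assumes dag: "is_dag G par"
    and states: "\<And>s. s \<in> G \<Longrightarrow> finite (X s) \<and> X s \<noteq> {}"
    and models: "\<And>s y. s \<in> G \<Longrightarrow> y \<in> PiE (par s) X \<Longrightarrow> local_model (X s) (M s y)"
    and x: "x \<in> PiE G X"
  shows "lower_irr G par X M {x} = (\<Prod>s\<in>G. lowerP (M s (restrict x (par s))) (x s)) \<and>
         upper_irr G par X M {x} = (\<Prod>s\<in>G. upperP (M s (restrict x (par s))) (x s))"
proof -
  interpret bn G par X M by (intro bn.intro) (use dag states models in auto)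
  define qmin where "qmin s y = (SOME p. p \<in> M s y \<and> (\<forall>p'\<in>M s y. p (x s) \<le> p' (x s)))" for s y
  define qmax where "qmax s y = (SOME p. p \<in> M s y \<and> (\<forall>p'\<in>M s y. p' (x s) \<le> p (x s)))" for s y
  have qmin: "qmin s y \<in> M s y \<and> (\<forall>p'\<in>M s y. qmin s y (x s) \<le> p' (x s))"
    if "s \<in> G" "y \<in> PiE (par s) X" for s y
  proof -
    have "\<exists>p\<in>M s y. \<forall>p'\<in>M s y. p (x s) \<le> p' (x s)"
      using attain(1)[OF models[OF that]] states that(1) by blast
    hence "\<exists>p. p \<in> M s y \<and> (\<forall>p'\<in>M s y. p (x s) \<le> p' (x s))" by blast
    thus ?thesis unfolding qmin_def by (rule someI_ex)
  qed
  have qmax: "qmax s y \<in> M s y \<and> (\<forall>p'\<in>M s y. p' (x s) \<le> qmax s y (x s))"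
    if "s \<in> G" "y \<in> PiE (par s) X" for s y
  proof -
    have "\<exists>p\<in>M s y. \<forall>p'\<in>M s y. p' (x s) \<le> p (x s)"
      using attain(2)[OF models[OF that]] states that(1) by blast
    hence "\<exists>p. p \<in> M s y \<and> (\<forall>p'\<in>M s y. p' (x s) \<le> p (x s))" by blast
    thus ?thesis unfolding qmax_def by (rule someI_ex)
  qed
  have vmin: "qmin s (restrict x (par s)) (x s) = lowerP (M s (restrict x (par s))) (x s)" if s: "s \<in> G" for s
  proof -
    have r: "restrict x (par s) \<in> PiE (par s) X" using restr_in[OF x s] .
    show ?thesis unfolding lowerP_def
      using qmin[OF s r] by (intro cInf_eq_minimum[symmetric]) auto
  qed
  have vmax: "qmax s (restrict x (par s)) (x s) = upperP (M s (restrict x (par s))) (x s)" if s: "s \<in> G" for s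
  proof -
    have r: "restrict x (par s) \<in> PiE (par s) X" using restr_in[OF x s] .
    show ?thesis unfolding upperP_def
      using qmax[OF s r] by (intro cSup_eq_maximum[symmetric]) auto
  qed
  obtain P1 where P1: "P1 \<in> irr_ext G par X M" "P1 {x} (PiE G X) = (\<Prod>t\<in>G. qmin t (restrict x (par t)) (x t))"
    using construct[of qmin, OF _ x] qmin by blast
  obtain P2 where P2: "P2 \<in> irr_ext G par X M" "P2 {x} (PiE G X) = (\<Prod>t\<in>G. qmax t (restrict x (par t)) (x t))"
    using construct[of qmax, OF _ x] qmax by blast
  have e1: "P1 {x} (PiE G X) = (\<Prod>s\<in>G. lowerP (M s (restrict x (par s))) (x s))"
    unfolding P1(2) using vmin by (intro prod.cong) auto
  have e2: "P2 {x} (PiE G X) = (\<Prod>s\<in>G. upperP (M s (restrict x (par s))) (x s))"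
    unfolding P2(2) using vmax by (intro prod.cong) auto
  have "lower_irr G par X M {x} = (\<Prod>s\<in>G. lowerP (M s (restrict x (par s))) (x s))"
    unfolding lower_irr_def
  proof (rule cInf_eq_minimum)
    show "(\<Prod>s\<in>G. lowerP (M s (restrict x (par s))) (x s)) \<in> (\<lambda>P. P {x} (PiE G X)) ` irr_ext G par X M"
      by (rule image_eqI[where f="\<lambda>P. P {x} (PiE G X)", OF e1[symmetric] P1(1)])
    fix y assume "y \<in> (\<lambda>P. P {x} (PiE G X)) ` irr_ext G par X M"
    then obtain P where P: "P \<in> irr_ext G par X M" "y = P {x} (PiE G X)" by blast
    show "(\<Prod>s\<in>G. lowerP (M s (restrict x (par s))) (x s)) \<le> y"
      unfolding P(2) using bounds_all[OF P(1) x] by (rule conjunct1)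
  qed
  moreover have "upper_irr G par X M {x} = (\<Prod>s\<in>G. upperP (M s (restrict x (par s))) (x s))"
    unfolding upper_irr_def
  proof (rule cSup_eq_maximum)
    show "(\<Prod>s\<in>G. upperP (M s (restrict x (par s))) (x s)) \<in> (\<lambda>P. P {x} (PiE G X)) ` irr_ext G par X M"
      by (rule image_eqI[where f="\<lambda>P. P {x} (PiE G X)", OF e2[symmetric] P2(1)])
    fix y assume "y \<in> (\<lambda>P. P {x} (PiE G X)) ` irr_ext G par X M"
    then obtain P where P: "P \<in> irr_ext G par X M" "y = P {x} (PiE G X)" by blast
    show "y \<le> (\<Prod>s\<in>G. upperP (M s (restrict x (par s))) (x s))"
      unfolding P(2) using bounds_all[OF P(1) x] by (rule conjunct2)
  qed
  ultimately show ?thesis by blast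
qed



end
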